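(* A $po$-$\Gamma$-semigroup $M$ is intra-regular if and only if for every fuzzy right ideal $f$ and every fuzzy left ideal $g$ of $M$, we have $f\wedge g\preceq g\circ f$.
   Context: Let $M$ and $\Gamma$ be nonempty sets with a map $M\times\Gamma\times M\to M$, $(a,\gamma,b)\mapsto a\gamma b$, satisfying $(a\gamma b)\mu c=a\gamma(b\mu c)$ for all $a,b,c\in M$, $\gamma,\mu\in\Gamma$. A $po$-$\Gamma$-semigroup is such an $M$ with a partial order $\le$ such that $a\le b$ implies $a\gamma c\le b\gamma c$ and $c\gamma a\le c\gamma b$ for all $c\in M$, $\gamma\in\Gamma$. For $H\subseteq M$, $(H]=\{t\in M: t\le h \text{ for some } h\in H\}$; $M\Gamma a\Gamma a\Gamma M=\{x\gamma a\mu a\rho y: x,y\in M,\gamma,\mu,\rho\in\Gamma\}$. $M$ is intra-regular if $a\in(M\Gamma a\Gamma a\Gamma M]$ for every $a\in M$. A fuzzy subset of $M$ is a map $M\to[0,1]$. For $a\in M$ let $A_a=\{(y,z)\in M\times M: a\le y\gamma z \text{ for some }\gamma\in\Gamma\}$. $(f\circ g)(a)=\bigvee_{(y,z)\in A_a}\min\{f(y),g(z)\}$ if $A_a\ne\emptyset$, and $0$ otherwise. $(f\wedge g)(a)=\min\{f(a),g(a)\}$; $f\preceq g$ means $f(a)\le g(a)$ for all $a$. A fuzzy right (resp. left) ideal is a fuzzy subset $f$ with $f(x\gamma y)\ge f(x)$ (resp. $f(x\gamma y)\ge f(y)$) for all $x,y\in M,\gamma\in\Gamma$, and $x\le y\Rightarrow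 f(x)\ge f(y)$. *)

theory Defs
  imports Complex_Main
begin

definition po_gamma_semigroup :: "('m \<Rightarrow> 'g \<Rightarrow> 'm \<Rightarrow> 'm) \<Rightarrow> ('m \<Rightarrow> 'm \<Rightarrow> bool) \<Rightarrow> bool" where
  "po_gamma_semigroup mult le \<longleftrightarrow>
     (\<forall>a b c \<gamma> \<mu>. mult (mult a \<gamma> b) \<mu> c = mult a \<gamma> (mult b \<mu> c)) \<and>
     (\<forall>a. le a a) \<and> (\<forall>a b. le a b \<and> le b a \<longrightarrow> a = b) \<and>
     (\<forall>a b c. le a b \<and> le b c \<longrightarrow> le a c) \<and>
     (\<forall>a b c \<gamma>. le a b \<longrightarrow> le (mult a \<gamma> c) (mult b \<gamma> c) \<and> le (mult c \<gamma> a) (mult c \<gamma> b))"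

definition down_closure :: "('m \<Rightarrow> 'm \<Rightarrow> bool) \<Rightarrow> 'm set \<Rightarrow> 'm set" where
  "down_closure le H = {t. \<exists>h\<in>H. le t h}"

definition intra_regular :: "('m \<Rightarrow> 'g \<Rightarrow> 'm \<Rightarrow> 'm) \<Rightarrow> ('m \<Rightarrow> 'm \<Rightarrow> bool) \<Rightarrow> bool" where
  "intra_regular mult le \<longleftrightarrow>
     (\<forall>a. a \<in> down_closure le
        {mult (mult (mult x \<gamma> a) \<mu> a) \<rho> y | x y \<gamma> \<mu> \<rho>. True})"

definition fuzzy_subset :: "('m \<Rightarrow> real) \<Rightarrow> bool" where
  "fuzzy_subset f \<longleftrightarrow> (\<forall>x. 0 \<le> f x \<and> f x \<le> 1)"

definition A_set :: "('m \<Rightarrow> 'g \<Rightarrow> 'm \<Rightarrow> 'm) \<Rightarrow> ('m \<Rightarrow> 'm \<Rightarrow> bool) \<Rightarrow> 'm \<Rightarrow> ('m \<times> 'm) set" where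
  "A_set mult le a = {(y, z). \<exists>\<gamma>. le a (mult y \<gamma> z)}"

definition fuzzy_comp :: "('m \<Rightarrow> 'g \<Rightarrow> 'm \<Rightarrow> 'm) \<Rightarrow> ('m \<Rightarrow> 'm \<Rightarrow> bool) \<Rightarrow>
    ('m \<Rightarrow> real) \<Rightarrow> ('m \<Rightarrow> real) \<Rightarrow> 'm \<Rightarrow> real" where
  "fuzzy_comp mult le f g a =
     (if A_set mult le a = {} then 0
      else Sup ((\<lambda>(y, z). min (f y) (g z)) ` A_set mult le a))"

definition fuzzy_inf :: "('m \<Rightarrow> real) \<Rightarrow> ('m \<Rightarrow> real) \<Rightarrow> 'm \<Rightarrow> real" where
  "fuzzy_inf f g a = min (f a) (g a)"

definition fuzzy_le :: "('m \<Rightarrow> real) \<Rightarrow> ('m \<Rightarrow> real) \<Rightarrow> bool" where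
  "fuzzy_le f g \<longleftrightarrow> (\<forall>a. f a \<le> g a)"

definition fuzzy_right_ideal :: "('m \<Rightarrow> 'g \<Rightarrow> 'm \<Rightarrow> 'm) \<Rightarrow> ('m \<Rightarrow> 'm \<Rightarrow> bool) \<Rightarrow> ('m \<Rightarrow> real) \<Rightarrow> bool" where
  "fuzzy_right_ideal mult le f \<longleftrightarrow> fuzzy_subset f \<and>
     (\<forall>x y \<gamma>. f (mult x \<gamma> y) \<ge> f x) \<and> (\<forall>x y. le x y \<longrightarrow> f x \<ge> f y)"

definition fuzzy_left_ideal :: "('m \<Rightarrow> 'g \<Rightarrow> 'm \<Rightarrow> 'm) \<Rightarrow> ('m \<Rightarrow> 'm \<Rightarrow> bool) \<Rightarrow> ('m \<Rightarrow> real) \<Rightarrow> bool" where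
  "fuzzy_left_ideal mult le f \<longleftrightarrow> fuzzy_subset f \<and>
     (\<forall>x y \<gamma>. f (mult x \<gamma> y) \<ge> f y) \<and> (\<forall>x y. le x y \<longrightarrow> f x \<ge> f y)"

end

theory Submission
  imports Defs
begin

lemma key_cases:
  fixes mult :: "'m \<Rightarrow> 'g \<Rightarrow> 'm \<Rightarrow> 'm" and le :: "'m \<Rightarrow> 'm \<Rightarrow> bool"
  assumes as: "\<And>a b c \<gamma> \<mu>. mult (mult a \<gamma> b) \<mu> c = mult a \<gamma> (mult b \<mu> c)"
    and tr: "\<And>a b c. le a b \<Longrightarrow> le b c \<Longrightarrow> le a c"
    and ml: "\<And>a b c \<gamma>. le a b \<Longrightarrow> le (mult a \<gamma> c) (mult b \<gamma> c)"
    and mr: "\<And>a b c \<gamma>. le a b \<Longrightarrow> le (mult c \<gamma> a) (mult c \<gamma> b)"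
    and h: "le a (mult y \<gamma> z)"
    and hy: "le y a \<or> (\<exists>x \<delta>. le y (mult x \<delta> a))"
    and hz: "le z a \<or> (\<exists>w \<epsilon>. le z (mult a \<epsilon> w))"
  shows "\<exists>x y \<gamma> \<mu> \<rho>. le a (mult (mult (mult x \<gamma> a) \<mu> a) \<rho> y)"
proof -
  have mb: "le (mult y \<gamma> z) (mult y' \<gamma> z')" if "le y y'" "le z z'" for y y' z z'
    using tr[OF ml[OF that(1)] mr[OF that(2)]] .
  from hy obtain u where u: "le y u" "u = a \<or> (\<exists>x \<delta>. u = mult x \<delta> a)" by blast
  from hz obtain v where v: "le z v" "v = a \<or> (\<exists>w \<epsilon>. v = mult a \<epsilon> w)" by blast
  have A: "le a (mult u \<gamma> v)" using tr[OF h mb[OF u(1) v(1)]] .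
  show ?thesis
  proof (cases "u = a")
    case True
    show ?thesis
    proof (cases "v = a")
      case True
      with \<open>u = a\<close> A have A: "le a (mult a \<gamma> a)" by simp
      have "le (mult a \<gamma> a) (mult (mult a \<gamma> a) \<gamma> a)" using ml[OF A] .
      moreover have "le (mult (mult a \<gamma> a) \<gamma> a) (mult (mult (mult a \<gamma> a) \<gamma> a) \<gamma> a)"
        using ml[OF ml[OF A]] by (simp add: as)
      ultimately have "le a (mult (mult (mult a \<gamma> a) \<gamma> a) \<gamma> a)" using A tr by metis
      thus ?thesis by blast
    next
      case False
      with v obtain w \<epsilon> where vv: "v = mult a \<epsilon> w" by blast
      with \<open>u = a\<close> A have A: "le a (mult a \<gamma> (mult a \<epsilon> w))" by simp
      have "le (mult a \<gamma> (mult a \<epsilon> w)) (mult a \<gamma> (mult (mult a \<gamma> (mult a \<epsilon> w)) \<epsilon> w))"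
        using mr[OF ml[OF A]] .
      hence "le a (mult (mult (mult a \<gamma> a) \<gamma> a) \<epsilon> (mult w \<epsilon> w))"
        using tr[OF A] by (simp add: as)
      thus ?thesis by blast
    qed
  next
    case False
    with u obtain x \<delta> where uu: "u = mult x \<delta> a" by blast
    show ?thesis
    proof (cases "v = a")
      case True
      with uu A have A: "le a (mult (mult x \<delta> a) \<gamma> a)" by simp
      have "le (mult (mult x \<delta> a) \<gamma> a) (mult (mult x \<delta> (mult (mult x \<delta> a) \<gamma> a)) \<gamma> a)"
        using ml[OF mr[OF A]] .
      hence "le a (mult (mult (mult (mult x \<delta> x) \<delta> a) \<gamma> a) \<gamma> a)"
        using tr[OF A] by (simp add: as)
      thus ?thesis by blast
    next
      case False
      with v obtain w \<epsilon> where vv: "v = mult a \<epsilon> w" by blast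
      with uu A have "le a (mult (mult x \<delta> a) \<gamma> (mult a \<epsilon> w))" by simp
      hence "le a (mult (mult (mult x \<delta> a) \<gamma> a) \<epsilon> w)" by (simp add: as)
      thus ?thesis by blast
    qed
  qed
qed

theorem theorem16:
  fixes mult :: "'m \<Rightarrow> 'g \<Rightarrow> 'm \<Rightarrow> 'm" and le :: "'m \<Rightarrow> 'm \<Rightarrow> bool"
  assumes "po_gamma_semigroup mult le"
  shows "intra_regular mult le \<longleftrightarrow>
    (\<forall>f g. fuzzy_right_ideal mult le f \<and> fuzzy_left_ideal mult le g \<longrightarrow>
       fuzzy_le (fuzzy_inf f g) (fuzzy_comp mult le g f))"
proof -
  have as: "\<And>a b c \<gamma> \<mu>. mult (mult a \<gamma> b) \<mu> c = mult a \<gamma> (mult b \<mu> c)"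
    and rf: "\<And>a. le a a"
    and tr: "\<And>a b c. le a b \<Longrightarrow> le b c \<Longrightarrow> le a c"
    and ml: "\<And>a b c \<gamma>. le a b \<Longrightarrow> le (mult a \<gamma> c) (mult b \<gamma> c)"
    and mr: "\<And>a b c \<gamma>. le a b \<Longrightarrow> le (mult c \<gamma> a) (mult c \<gamma> b)"
    using assms unfolding po_gamma_semigroup_def by blast+
  show ?thesis
  proof
    assume IR: "intra_regular mult le"
    show "\<forall>f g. fuzzy_right_ideal mult le f \<and> fuzzy_left_ideal mult le g \<longrightarrow>
       fuzzy_le (fuzzy_inf f g) (fuzzy_comp mult le g f)"
    proof (intro allI impI)
      fix f g assume fg: "fuzzy_right_ideal mult le f \<and> fuzzy_left_ideal mult le g"
      show "fuzzy_le (fuzzy_inf f g) (fuzzy_comp mult le g f)"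
        unfolding fuzzy_le_def
      proof
        fix a
        from IR obtain x y \<gamma> \<mu> \<rho> where h: "le a (mult (mult (mult x \<gamma> a) \<mu> a) \<rho> y)"
          unfolding intra_regular_def down_closure_def by blast
        hence mem: "(mult x \<gamma> a, mult a \<rho> y) \<in> A_set mult le a"
          unfolding A_set_def by (auto simp: as)
        have gx: "g (mult x \<gamma> a) \<ge> g a" and fy: "f (mult a \<rho> y) \<ge> f a"
          using fg unfolding fuzzy_right_ideal_def fuzzy_left_ideal_def by auto
        have bdd: "bdd_above ((\<lambda>(y, z). min (g y) (f z)) ` A_set mult le a)"
          using fg unfolding fuzzy_right_ideal_def fuzzy_subset_def bdd_above_def
          by (intro exI[of _ 1]) (auto simp: min_le_iff_disj)
        have "fuzzy_inf f g a \<le> min (g (mult x \<gamma> a)) (f (mult a \<rho> y))"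
          unfolding fuzzy_inf_def using gx fy by auto
        also have "\<dots> \<le> Sup ((\<lambda>(y, z). min (g y) (f z)) ` A_set mult le a)"
          by (rule cSup_upper[OF _ bdd]) (use mem in force)
        finally show "fuzzy_inf f g a \<le> fuzzy_comp mult le g f a"
          unfolding fuzzy_comp_def using mem by auto
      qed
    qed
  next
    assume H: "\<forall>f g. fuzzy_right_ideal mult le f \<and> fuzzy_left_ideal mult le g \<longrightarrow>
       fuzzy_le (fuzzy_inf f g) (fuzzy_comp mult le g f)"
    show "intra_regular mult le"
      unfolding intra_regular_def down_closure_def
    proof
      fix a
      define R where "R = {t. le t a \<or> (\<exists>w \<epsilon>. le t (mult a \<epsilon> w))}"
      define L where "L = {t. le t a \<or> (\<exists>x \<delta>. le t (mult x \<delta> a))}"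
      define f where "f = (\<lambda>t. if t \<in> R then 1 else (0::real))"
      define g where "g = (\<lambda>t. if t \<in> L then 1 else (0::real))"
      have fR: "fuzzy_right_ideal mult le f"
        unfolding fuzzy_right_ideal_def fuzzy_subset_def f_def
      proof (intro conjI allI impI)
        fix x y \<gamma>
        show "(if x \<in> R then 1 else 0) \<le> (if mult x \<gamma> y \<in> R then 1 else (0::real))"
        proof (cases "x \<in> R")
          case True
          then consider "le x a" | w \<epsilon> where "le x (mult a \<epsilon> w)" unfolding R_def by blast
          hence "mult x \<gamma> y \<in> R"
          proof cases
            case 1 thus ?thesis unfolding R_def using ml[OF 1] by blast
          next
            case 2 thus ?thesis unfolding R_def using ml[OF 2, of \<gamma> y] by (auto simp: as)
          qed
          thus ?thesis by simp
        qed simp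
      next
        fix x y assume "le x y"
        thus "(if y \<in> R then 1 else 0) \<le> (if x \<in> R then 1 else (0::real))"
          unfolding R_def using tr[OF \<open>le x y\<close>] by auto
      qed auto
      have gL: "fuzzy_left_ideal mult le g"
        unfolding fuzzy_left_ideal_def fuzzy_subset_def g_def
      proof (intro conjI allI impI)
        fix x y \<gamma>
        show "(if y \<in> L then 1 else 0) \<le> (if mult x \<gamma> y \<in> L then 1 else (0::real))"
        proof (cases "y \<in> L")
          case True
          then consider "le y a" | z \<delta> where "le y (mult z \<delta> a)" unfolding L_def by blast
          hence "mult x \<gamma> y \<in> L"
          proof cases
            case 1 thus ?thesis unfolding L_def using mr[OF 1] by blast
          next
            case 2 thus ?thesis unfolding L_def using mr[OF 2, of x \<gamma>]
              by (auto simp: as[symmetric])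
          qed
          thus ?thesis by simp
        qed simp
      next
        fix x y assume "le x y"
        thus "(if y \<in> L then 1 else 0) \<le> (if x \<in> L then 1 else (0::real))"
          unfolding L_def using tr[OF \<open>le x y\<close>] by auto
      qed auto
      have "fuzzy_inf f g a = 1" unfolding fuzzy_inf_def f_def g_def R_def L_def using rf by auto
      hence one: "1 \<le> fuzzy_comp mult le g f a" using H fR gL unfolding fuzzy_le_def by metis
      let ?S = "(\<lambda>(y, z). min (g y) (f z)) ` A_set mult le a"
      have ne: "A_set mult le a \<noteq> {}" using one unfolding fuzzy_comp_def by (auto split: if_splits)
      have "\<exists>p\<in>A_set mult le a. (\<lambda>(y, z). min (g y) (f z)) p = 1"
      proof (rule ccontr)
        assume nt: "\<not> ?thesis"
        have "\<forall>s\<in>?S. s \<le> 0"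
        proof
          fix s assume "s \<in> ?S"
          then obtain y z where yz: "(y, z) \<in> A_set mult le a" "s = min (g y) (f z)" by auto
          with nt have "min (g y) (f z) \<noteq> 1" by auto
          thus "s \<le> 0" unfolding yz(2) f_def g_def by (auto split: if_splits)
        qed
        hence "Sup ?S \<le> 0" using ne by (intro cSup_least) auto
        thus False using one ne unfolding fuzzy_comp_def by auto
      qed
      then obtain y z where yz: "(y, z) \<in> A_set mult le a" "min (g y) (f z) = 1" by auto
      from yz(2) have yL: "y \<in> L" and zR: "z \<in> R" unfolding f_def g_def by (auto split: if_splits)
      from yz(1) obtain \<gamma> where hh: "le a (mult y \<gamma> z)" unfolding A_set_def by auto
      have hy: "le y a \<or> (\<exists>x \<delta>. le y (mult x \<delta> a))" using yL unfolding L_def by simp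
      have hz: "le z a \<or> (\<exists>w \<epsilon>. le z (mult a \<epsilon> w))" using zR unfolding R_def by simp
      have "\<exists>x y \<gamma> \<mu> \<rho>. le a (mult (mult (mult x \<gamma> a) \<mu> a) \<rho> y)"
        by (rule key_cases[where mult=mult and le=le, OF as tr ml mr hh hy hz])
      then obtain x1 y1 \<gamma>1 \<mu>1 \<rho>1 where e: "le a (mult (mult (mult x1 \<gamma>1 a) \<mu>1 a) \<rho>1 y1)" by blast
      have m: "mult (mult (mult x1 \<gamma>1 a) \<mu>1 a) \<rho>1 y1 \<in> {mult (mult (mult x \<gamma> a) \<mu> a) \<rho> y |x y \<gamma> \<mu> \<rho>. True}"
        by (rule CollectI, rule exI[of _ x1], rule exI[of _ y1], rule exI[of _ \<gamma>1], rule exI[of _ \<mu>1], rule exI[of _ \<rho>1], simp)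
      show "a \<in> {t. \<exists>h\<in>{mult (mult (mult x \<gamma> a) \<mu> a) \<rho> y |x y \<gamma> \<mu> \<rho>. True}. le t h}"
        using m e by blast
    qed
  qed
qed

end
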